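(* Let $\mathcal K\subset S^D_+$ be compact and $\mathcal P^\uparrow(\mathcal K)=\mathcal P^\uparrow(S^D_+)\cap\mathcal P(\mathcal K)$. The closed convex hull of $\mathcal P^\uparrow(\mathcal K)$ in $(\mathcal P(\mathcal K),d)$ is $\mathcal P(\mathcal K)$, and $\mathcal P^\uparrow(\mathcal K)$ is an extreme set in $\mathcal P(\mathcal K)$: every Borel probability measure $\eta$ on $\mathcal P(\mathcal K)$ with $\mathrm{Bar}(\eta)\in\mathcal P^\uparrow(\mathcal K)$ is concentrated on $\mathcal P^\uparrow(\mathcal K)$.
   Context: $S^D_+$: positive semidefinite symmetric $D\times D$ matrices with Frobenius norm. $\mathcal P(\mathcal K)$: Borel probability measures on $\mathcal K$ with $1$-Wasserstein distance $d$. A probability measure on $S^D_+$ is monotone if it is the law of $\mathsf q(U)$, $U$ uniform on $[0,1)$, for some $\mathsf q:[0,1)\to S^D_+$ with $\mathsf q(v)-\mathsf q(u)\in S^D_+$ whenever $u\le v$; $\mathcal P^\uparrow(S^D_+)$ is the set of such measures. For a Borel probability measure $\eta$ on $(\mathcal P(\mathcal K),d)$, $\mathrm{Bar}(\eta)\in\mathcal P(\mathcal K)$ is defined by $\mathrm{Bar}(\eta)(A)=\int\nu(A)\,\mathrm d\eta(\nu)$. *)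

theory Defs
  imports "HOL-Probability.Probability"
begin

type_synonym 'n mat = "real ^ 'n ^ 'n"

text \<open>Positive semidefinite symmetric matrices (the cone S^D_+), D = CARD('n).
  The norm on real^'n^'n is the Frobenius norm.\<close>
definition psd :: "('n::finite) mat set" where
  "psd = {A. transpose A = A \<and> (\<forall>x. 0 \<le> x \<bullet> (A *v x))}"

definition loewner_le :: "('n::finite) mat \<Rightarrow> 'n mat \<Rightarrow> bool" where
  "loewner_le A B \<longleftrightarrow> B - A \<in> psd"

text \<open>P(K): Borel probability measures on the matrix space concentrated on K
  (identified with Borel probability measures on K).\<close>
definition Pm :: "('n::finite) mat set \<Rightarrow> ('n mat) measure set" where
  "Pm K = {M. sets M = sets borel \<and> prob_space M \<and> emeasure M K = 1}"

definition couplings :: "('n::finite) mat measure \<Rightarrow> 'n mat measure \<Rightarrow> ('n mat \<times> 'n mat) measure set" where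
  "couplings \<mu> \<nu> = {\<pi>. sets \<pi> = sets (borel \<Otimes>\<^sub>M borel) \<and> prob_space \<pi> \<and>
      (\<forall>A\<in>sets borel. emeasure \<pi> (A \<times> UNIV) = emeasure \<mu> A \<and>
                      emeasure \<pi> (UNIV \<times> A) = emeasure \<nu> A)}"

definition W1 :: "('n::finite) mat measure \<Rightarrow> 'n mat measure \<Rightarrow> real" where
  "W1 \<mu> \<nu> = enn2real (INF \<pi>\<in>couplings \<mu> \<nu>. \<integral>\<^sup>+ z. ennreal (dist (fst z) (snd z)) \<partial>\<pi>)"

text \<open>Monotone probability measures on S^D_+: laws of q(U), U uniform on [0,1),
  q : [0,1) \<rightarrow> S^D_+ Loewner-nondecreasing.\<close>
definition Pmono :: "('n::finite) mat measure set" where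
  "Pmono = {M. \<exists>q::real \<Rightarrow> 'n mat. q \<in> borel_measurable borel \<and>
       (\<forall>u\<in>{0..<1}. q u \<in> psd) \<and>
       (\<forall>u\<in>{0..<1}. \<forall>v\<in>{0..<1}. u \<le> v \<longrightarrow> loewner_le (q u) (q v)) \<and>
       M = distr (uniform_measure lborel {0..<1}) borel q}"

definition Pmono_on :: "('n::finite) mat set \<Rightarrow> 'n mat measure set" where
  "Pmono_on K = Pmono \<inter> Pm K"

definition mix :: "real \<Rightarrow> ('n::finite) mat measure \<Rightarrow> 'n mat measure \<Rightarrow> 'n mat measure" where
  "mix t \<mu> \<nu> = measure_of UNIV (sets borel)
      (\<lambda>A. ennreal t * emeasure \<mu> A + ennreal (1 - t) * emeasure \<nu> A)"

definition W1_closed :: "('n::finite) mat set \<Rightarrow> 'n mat measure set \<Rightarrow> bool" where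
  "W1_closed K C \<longleftrightarrow> C \<subseteq> Pm K \<and>
     (\<forall>f \<nu>. (\<forall>n. f n \<in> C) \<longrightarrow> \<nu> \<in> Pm K \<longrightarrow> (\<lambda>n. W1 (f n) \<nu>) \<longlonglongrightarrow> 0 \<longrightarrow> \<nu> \<in> C)"

definition mix_convex :: "('n::finite) mat measure set \<Rightarrow> bool" where
  "mix_convex C \<longleftrightarrow> (\<forall>\<mu>\<in>C. \<forall>\<nu>\<in>C. \<forall>t\<in>{0..1}. mix t \<mu> \<nu> \<in> C)"

definition closed_convex_hull_W1 :: "('n::finite) mat set \<Rightarrow> 'n mat measure set \<Rightarrow> 'n mat measure set" where
  "closed_convex_hull_W1 K S =
     \<Inter>{C. S \<subseteq> C \<and> W1_closed K C \<and> mix_convex C}"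

definition W1_open :: "('n::finite) mat set \<Rightarrow> 'n mat measure set \<Rightarrow> bool" where
  "W1_open K U \<longleftrightarrow> U \<subseteq> Pm K \<and>
     (\<forall>\<mu>\<in>U. \<exists>e>0. \<forall>\<nu>\<in>Pm K. W1 \<mu> \<nu> < e \<longrightarrow> \<nu> \<in> U)"

definition W1_borel_sets :: "('n::finite) mat set \<Rightarrow> 'n mat measure set set" where
  "W1_borel_sets K = sigma_sets (Pm K) {U. W1_open K U}"

end

theory Submission
  imports Defs
begin

lemma zero_psd: "(0::('n::finite) mat) \<in> psd"
  by (simp add: psd_def transpose_def vec_eq_iff)

lemma loewner_refl: "loewner_le (A::('n::finite) mat) A"
  by (simp add: loewner_le_def zero_psd)

lemma closed_psd: "closed (psd :: ('n::finite) mat set)"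
proof -
  have eq: "psd = (\<Inter>i. \<Inter>j. {A::'n mat. A$i$j = A$j$i}) \<inter> (\<Inter>x. {A. 0 \<le> x \<bullet> (A *v x)})"
    unfolding psd_def by (auto simp: vec_eq_iff transpose_def)
  have c1: "closed {A::'n mat. A$i$j = A$j$i}" for i j
    by (intro closed_Collect_eq continuous_on_component continuous_on_id)
  have c2: "closed {A::'n mat. 0 \<le> x \<bullet> (A *v x)}" for x :: "real^'n"
  proof -
    have "x \<bullet> (A *v x) = (\<Sum>i\<in>UNIV. \<Sum>j\<in>UNIV. x$i * (A$i$j * x$j))" for A :: "'n mat"
      by (simp add: matrix_vector_mult_def inner_vec_def sum_distrib_left)
    then have "{A::'n mat. 0 \<le> x \<bullet> (A *v x)} = {A. 0 \<le> (\<Sum>i\<in>UNIV. \<Sum>j\<in>UNIV. x$i * (A$i$j * x$j))}"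
      by simp
    also have "closed \<dots>"
      by (intro closed_Collect_le continuous_on_const continuous_on_sum continuous_on_mult continuous_on_component continuous_on_id)
    finally show ?thesis .
  qed
  show ?thesis unfolding eq
    by (intro closed_Int closed_INT ballI c1 c2)
qed

lemma sets_mix[simp]: "sets (mix t \<mu> \<nu>) = sets borel"
  using sets.sigma_sets_eq[of borel] by (simp add: mix_def)

lemma space_mix[simp]: "space (mix t \<mu> \<nu>) = UNIV"
  by (simp add: mix_def)

lemma emeasure_mix:
  fixes \<mu> \<nu> :: "('n::finite) mat measure"
  assumes "sets \<mu> = sets borel" "sets \<nu> = sets borel" "A \<in> sets borel"
  shows "emeasure (mix t \<mu> \<nu>) A = ennreal t * emeasure \<mu> A + ennreal (1 - t) * emeasure \<nu> A"
proof -
  have sa: "sigma_algebra UNIV (sets borel)"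
    using sets.sigma_algebra_axioms[of borel] by simp
  have pos: "positive (sets borel) (\<lambda>A. ennreal t * emeasure \<mu> A + ennreal (1 - t) * emeasure \<nu> A)"
    by (simp add: positive_def)
  have ca: "countably_additive (sets borel) (\<lambda>A. ennreal t * emeasure \<mu> A + ennreal (1 - t) * emeasure \<nu> A)"
    unfolding countably_additive_def
  proof (intro allI impI)
    fix F :: "nat \<Rightarrow> 'n mat set" assume F: "range F \<subseteq> sets borel" "disjoint_family F" "\<Union>(range F) \<in> sets borel"
    have "(\<Sum>i. ennreal t * emeasure \<mu> (F i) + ennreal (1 - t) * emeasure \<nu> (F i))
       = (\<Sum>i. ennreal t * emeasure \<mu> (F i)) + (\<Sum>i. ennreal (1 - t) * emeasure \<nu> (F i))"
      by (rule suminf_add[symmetric]) auto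
    also have "\<dots> = ennreal t * (\<Sum>i. emeasure \<mu> (F i)) + ennreal (1 - t) * (\<Sum>i. emeasure \<nu> (F i))"
      by (simp add: ennreal_suminf_cmult)
    also have "\<dots> = ennreal t * emeasure \<mu> (\<Union>(range F)) + ennreal (1 - t) * emeasure \<nu> (\<Union>(range F))"
      using F assms by (simp add: suminf_emeasure)
    finally show "(\<Sum>i. ennreal t * emeasure \<mu> (F i) + ennreal (1 - t) * emeasure \<nu> (F i))
       = ennreal t * emeasure \<mu> (\<Union>(range F)) + ennreal (1 - t) * emeasure \<nu> (\<Union>(range F))" .
  qed
  show ?thesis
    unfolding mix_def using emeasure_measure_of_sigma[OF sa pos ca assms(3)] by simp
qed

lemma prob_space_mix:
  assumes "prob_space \<mu>" "prob_space \<nu>" "sets \<mu> = sets borel" "sets \<nu> = sets borel" "t \<in> {0..1}"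
  shows "prob_space (mix t \<mu> \<nu>)"
proof (rule prob_spaceI)
  have "emeasure (mix t \<mu> \<nu>) UNIV = ennreal t * emeasure \<mu> UNIV + ennreal (1 - t) * emeasure \<nu> UNIV"
    using assms by (intro emeasure_mix) auto
  also have "\<dots> = ennreal t + ennreal (1 - t)"
    using assms prob_space.emeasure_space_1[of \<mu>] prob_space.emeasure_space_1[of \<nu>]
      sets_eq_imp_space_eq[of \<mu> borel] sets_eq_imp_space_eq[of \<nu> borel] by simp
  also have "\<dots> = 1" using assms by (subst ennreal_plus[symmetric]) auto
  finally show "emeasure (mix t \<mu> \<nu>) (space (mix t \<mu> \<nu>)) = 1" by simp
qed

lemma mix_convex_Pm: "mix_convex (Pm K)"
  unfolding mix_convex_def
proof (intro ballI)
  fix \<mu> \<nu> t assume H: "\<mu> \<in> Pm K" "\<nu> \<in> Pm K" "t \<in> {0..(1::real)}"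
  have "emeasure (mix t \<mu> \<nu>) K = 1"
  proof (cases "K \<in> sets borel")
    case True
    then have "emeasure (mix t \<mu> \<nu>) K = ennreal t * emeasure \<mu> K + ennreal (1 - t) * emeasure \<nu> K"
      using H by (intro emeasure_mix) (auto simp: Pm_def)
    also have "\<dots> = 1" using H by (simp add: Pm_def, subst ennreal_plus[symmetric]) auto
    finally show ?thesis .
  next
    case False
    then have "K \<notin> sets \<mu>" using H by (auto simp: Pm_def)
    then have "emeasure \<mu> K = 0" by (simp add: emeasure_notin_sets)
    then show ?thesis using H by (auto simp: Pm_def)
  qed
  then show "mix t \<mu> \<nu> \<in> Pm K"
    using H prob_space_mix[of \<mu> \<nu> t] by (auto simp: Pm_def)
qed

lemma prob_space_uniform01: "prob_space (uniform_measure lborel {0..<1::real})"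
  by (intro prob_space_uniform_measure) auto

lemma return_in_Pmono_on:
  assumes "s \<in> K" "K \<subseteq> psd" "K \<in> sets borel"
  shows "return borel (s::('n::finite) mat) \<in> Pmono_on K"
proof -
  have "return borel s = distr (uniform_measure lborel {0..<1::real}) borel (\<lambda>_. s)"
    using prob_space.distr_const[OF prob_space_uniform01, of s borel] by simp
  then have "return borel s \<in> Pmono"
    unfolding Pmono_def using assms by (intro CollectI exI[of _ "\<lambda>_. s"]) (auto simp: loewner_refl)
  moreover have "return borel s \<in> Pm K"
    using assms by (auto simp: Pm_def prob_space_return)
  ultimately show ?thesis by (simp add: Pmono_on_def)
qed

lemma eq_return_if:
  fixes \<nu> :: "('n::finite) mat measure"
  assumes "prob_space \<nu>" "sets \<nu> = sets borel" "measure \<nu> {s} = 1"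
  shows "\<nu> = return borel s"
proof (rule measure_eqI)
  show "sets \<nu> = sets (return borel s)" using assms by simp
  fix A assume A: "A \<in> sets \<nu>"
  interpret prob_space \<nu> by fact
  have sp: "space \<nu> = UNIV" using assms(2) sets_eq_imp_space_eq by fastforce
  have s: "{s} \<in> sets \<nu>" using assms by simp
  show "emeasure \<nu> A = emeasure (return borel s) A"
  proof (cases "s \<in> A")
    case True
    then have "measure \<nu> {s} \<le> measure \<nu> A" using A s by (intro finite_measure_mono) auto
    then have "measure \<nu> A = 1" using assms prob_le_1[of A] by simp
    then show ?thesis using True A assms by (simp add: emeasure_eq_measure)
  next
    case False
    then have "measure \<nu> A \<le> measure \<nu> (space \<nu> - {s})" using A sets.compl_sets[OF s] sp by (intro finite_measure_mono) auto
    also have "\<dots> = 0" using prob_compl[OF s] assms by simp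
    finally have "measure \<nu> A = 0" by (simp add: antisym)
    then show ?thesis using False A assms by (simp add: emeasure_eq_measure)
  qed
qed

lemma finite_support_in_C:
  fixes K :: "('n::finite) mat set"
  assumes C: "Pmono_on K \<subseteq> C" "mix_convex C" and K: "K \<subseteq> psd" "K \<in> sets borel"
    and S: "finite S" "S \<subseteq> K"
  shows "\<forall>\<nu>. sets \<nu> = sets borel \<longrightarrow> prob_space \<nu> \<longrightarrow> emeasure \<nu> S = 1 \<longrightarrow> \<nu> \<in> C"
  using S
proof (induction S rule: finite_induct)
  case empty
  then show ?case by simp
next
  case (insert s S)
  show ?case
  proof (intro allI impI)
    fix \<nu> :: "'n mat measure"
    assume \<nu>: "sets \<nu> = sets borel" "prob_space \<nu>" "emeasure \<nu> (insert s S) = 1"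
    interpret prob_space \<nu> by fact
    have sp: "space \<nu> = UNIV" using \<nu>(1) sets_eq_imp_space_eq by fastforce
    have fS: "S \<in> sets \<nu>" "{s} \<in> sets \<nu>" "insert s S \<in> sets \<nu>"
      unfolding \<nu>(1) using insert(1) by (simp_all add: borel_closed finite_imp_closed)
    have ret: "return borel s \<in> C"
      using C(1) return_in_Pmono_on[of s K] insert K by auto
    define p where "p = measure \<nu> {s}"
    have m1: "measure \<nu> (insert s S) = 1" using \<nu>(3) by (simp add: emeasure_eq_measure)
    have split: "measure \<nu> (insert s S) = p + measure \<nu> S"
      unfolding p_def using fS insert(2)
      by (subst insert_is_Un, intro finite_measure_Union) auto
    show "\<nu> \<in> C"
    proof (cases "p = 1")
      case True
      then have "\<nu> = return borel s" using eq_return_if[of \<nu> s] \<nu> p_def by auto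
      then show ?thesis using ret by simp
    next
      case False
      have p01: "0 \<le> p" "p < 1" using False p_def prob_le_1[of "{s}"] by (auto simp: less_le)
      have mS: "measure \<nu> S = 1 - p" using split m1 by simp
      define \<nu>' where "\<nu>' = uniform_measure \<nu> S"
      have eS: "emeasure \<nu> S = ennreal (1 - p)" using mS by (simp add: emeasure_eq_measure)
      have \<nu>'1: "sets \<nu>' = sets borel" "prob_space \<nu>'" "emeasure \<nu>' S = 1"
        unfolding \<nu>'_def using \<nu>(1) eS p01
        by (auto intro!: prob_space_uniform_measure emeasure_uniform_measure_1)
      then have "\<nu>' \<in> C" using insert(3) insert(4) by auto
      then have inC: "mix p (return borel s) \<nu>' \<in> C"
        using C(2) ret p01 unfolding mix_convex_def by auto
      have "\<nu> = mix p (return borel s) \<nu>'"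
      proof (rule measure_eqI)
        show "sets \<nu> = sets (mix p (return borel s) \<nu>')" using \<nu>(1) by simp
        fix A assume A: "A \<in> sets \<nu>"
        have Ab: "A \<in> sets borel" using A \<nu>(1) by simp
        have "measure \<nu> (A - insert s S) \<le> measure \<nu> (space \<nu> - insert s S)"
          using A sets.compl_sets[OF fS(3)] sp by (intro finite_measure_mono) auto
        also have "\<dots> = 0" using prob_compl[OF fS(3)] m1 by simp
        finally have z: "measure \<nu> (A - insert s S) = 0" by (simp add: antisym)
        have "measure \<nu> A = measure \<nu> ((A \<inter> {s}) \<union> (A \<inter> S) \<union> (A - insert s S))"
          by (rule arg_cong[where f="measure \<nu>"]) auto
        also have "\<dots> = measure \<nu> ((A \<inter> {s}) \<union> (A \<inter> S)) + measure \<nu> (A - insert s S)"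
          by (rule finite_measure_Union) (use A fS in auto)
        also have "measure \<nu> ((A \<inter> {s}) \<union> (A \<inter> S)) = measure \<nu> (A \<inter> {s}) + measure \<nu> (A \<inter> S)"
          by (rule finite_measure_Union) (use A fS insert(2) in auto)
        also have "measure \<nu> (A \<inter> {s}) = p * indicator A s"
          by (cases "s \<in> A") (auto simp: p_def)
        finally have mA: "measure \<nu> A = p * indicator A s + measure \<nu> (A \<inter> S)" using z by simp
        have "emeasure \<nu>' A = emeasure \<nu> (S \<inter> A) / emeasure \<nu> S"
          unfolding \<nu>'_def using A fS by (simp add: emeasure_uniform_measure)
        also have "emeasure \<nu> (S \<inter> A) = ennreal (measure \<nu> (A \<inter> S))"
          by (simp add: emeasure_eq_measure Int_commute)
        also have "ennreal (measure \<nu> (A \<inter> S)) / emeasure \<nu> S = ennreal (measure \<nu> (A \<inter> S) / (1 - p))"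
          unfolding eS using p01 by (intro divide_ennreal) auto
        finally have e\<nu>': "emeasure \<nu>' A = ennreal (measure \<nu> (A \<inter> S) / (1 - p))" .
        have "emeasure (mix p (return borel s) \<nu>') A
            = ennreal p * indicator A s + ennreal (1 - p) * ennreal (measure \<nu> (A \<inter> S) / (1 - p))"
          using Ab \<nu>'1 by (subst emeasure_mix) (auto simp: e\<nu>')
        also have "ennreal p * indicator A s = ennreal (p * indicator A s)"
          by (cases "s \<in> A") auto
        also have "ennreal (1 - p) * ennreal (measure \<nu> (A \<inter> S) / (1 - p)) = ennreal (measure \<nu> (A \<inter> S))"
          using p01 by (subst ennreal_mult''[symmetric]) auto
        also have "ennreal (p * indicator A s) + ennreal (measure \<nu> (A \<inter> S)) = ennreal (p * indicator A s + measure \<nu> (A \<inter> S))"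
          using p01 by (intro ennreal_plus[symmetric]) auto
        also have "\<dots> = emeasure \<nu> A" using mA by (simp add: emeasure_eq_measure)
        finally show "emeasure \<nu> A = emeasure (mix p (return borel s) \<nu>') A" by simp
      qed
      then show ?thesis using inC by simp
    qed
  qed
qed

fun pick :: "real \<Rightarrow> 'a::metric_space \<Rightarrow> 'a list \<Rightarrow> 'a \<Rightarrow> 'a" where
  "pick e d [] x = d"
| "pick e d (s # ss) x = (if dist x s < e then s else pick e d ss x)"

lemma pick_measurable: "pick e d ss \<in> borel_measurable borel"
proof (induction ss)
  case Nil
  have "pick e d [] = (\<lambda>x. d)" by (rule ext) simp
  then show ?case by simp
next
  case (Cons s ss)
  have eq: "pick e d (s # ss) = (\<lambda>x. if dist x s < e then s else pick e d ss x)" by (rule ext) simp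
  have "{x \<in> space borel. dist x s < e} = ball s e" by (auto simp: ball_def dist_commute)
  then have "{x \<in> space borel. dist x s < e} \<in> sets borel" by simp
  then show ?case unfolding eq by (intro measurable_If Cons measurable_const) auto
qed

lemma pick_range: "pick e d ss x \<in> insert d (set ss)"
  by (induction ss) auto

lemma pick_dist: "\<exists>s\<in>set ss. dist x s < e \<Longrightarrow> dist x (pick e d ss x) < e"
  by (induction ss) auto

lemma coupling_map:
  fixes \<mu> :: "('n::finite) mat measure"
  assumes \<mu>: "prob_space \<mu>" "sets \<mu> = sets borel" and g: "g \<in> borel_measurable borel"
  shows "distr \<mu> (borel \<Otimes>\<^sub>M borel) (\<lambda>x. (g x, x)) \<in> couplings (distr \<mu> borel g) \<mu>"
    and "(\<integral>\<^sup>+ z. ennreal (dist (fst z) (snd z)) \<partial>(distr \<mu> (borel \<Otimes>\<^sub>M borel) (\<lambda>x. (g x, x))))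
          = (\<integral>\<^sup>+ x. ennreal (dist (g x) x) \<partial>\<mu>)"
proof -
  have g': "g \<in> borel_measurable \<mu>" using g measurable_cong_sets[of \<mu> borel borel borel] \<mu>(2) by simp
  have id': "(\<lambda>x. x) \<in> borel_measurable \<mu>" using measurable_ident_sets[OF \<mu>(2)] by simp
  have h: "(\<lambda>x. (g x, x)) \<in> \<mu> \<rightarrow>\<^sub>M borel \<Otimes>\<^sub>M borel"
    by (intro measurable_Pair g' id')
  have sp: "space \<mu> = UNIV" using \<mu>(2) sets_eq_imp_space_eq by fastforce
  show "distr \<mu> (borel \<Otimes>\<^sub>M borel) (\<lambda>x. (g x, x)) \<in> couplings (distr \<mu> borel g) \<mu>"
    unfolding couplings_def
  proof (intro CollectI conjI ballI)
    show "sets (distr \<mu> (borel \<Otimes>\<^sub>M borel) (\<lambda>x. (g x, x))) = sets (borel \<Otimes>\<^sub>M borel)" by simp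
    show "prob_space (distr \<mu> (borel \<Otimes>\<^sub>M borel) (\<lambda>x. (g x, x)))"
      by (rule prob_space.prob_space_distr[OF \<mu>(1) h])
    fix A :: "'n mat set" assume A: "A \<in> sets borel"
    have AU: "A \<times> UNIV \<in> sets (borel \<Otimes>\<^sub>M (borel :: 'n mat measure))"
      by (intro pair_measureI A) (metis sets.top space_borel)
    have UA: "UNIV \<times> A \<in> sets ((borel :: 'n mat measure) \<Otimes>\<^sub>M borel)"
      by (intro pair_measureI A) (metis sets.top space_borel)
    have e1: "(\<lambda>x. (g x, x)) -` (A \<times> UNIV) \<inter> space \<mu> = g -` A \<inter> space \<mu>" by auto
    have e2: "(\<lambda>x. (g x, x)) -` (UNIV \<times> A) \<inter> space \<mu> = A" using sp by auto
    show "emeasure (distr \<mu> (borel \<Otimes>\<^sub>M borel) (\<lambda>x. (g x, x))) (A \<times> UNIV) = emeasure (distr \<mu> borel g) A"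
      unfolding emeasure_distr[OF h AU] emeasure_distr[OF g' A] e1 ..
    show "emeasure (distr \<mu> (borel \<Otimes>\<^sub>M borel) (\<lambda>x. (g x, x))) (UNIV \<times> A) = emeasure \<mu> A"
      unfolding emeasure_distr[OF h UA] e2 ..
  qed
  have m: "(\<lambda>z. ennreal (dist (fst z) (snd z))) \<in> borel_measurable (borel \<Otimes>\<^sub>M (borel :: 'n mat measure))"
    by (intro measurable_compose[OF _ measurable_ennreal] borel_measurable_dist measurable_fst'' measurable_snd'' measurable_ident_sets refl)
  show "(\<integral>\<^sup>+ z. ennreal (dist (fst z) (snd z)) \<partial>(distr \<mu> (borel \<Otimes>\<^sub>M borel) (\<lambda>x. (g x, x))))
          = (\<integral>\<^sup>+ x. ennreal (dist (g x) x) \<partial>\<mu>)"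
    using nn_integral_distr[OF h, of "\<lambda>z. ennreal (dist (fst z) (snd z))"] m by simp
qed

lemma W1_le:
  assumes "\<pi> \<in> couplings \<mu> \<nu>" "(\<integral>\<^sup>+ z. ennreal (dist (fst z) (snd z)) \<partial>\<pi>) \<le> ennreal e" "0 \<le> e"
  shows "W1 \<mu> \<nu> \<le> e"
proof -
  have "(INF \<pi>\<in>couplings \<mu> \<nu>. \<integral>\<^sup>+ z. ennreal (dist (fst z) (snd z)) \<partial>\<pi>) \<le> ennreal e"
    using assms(1,2) by (meson INF_lower order_trans)
  then have "enn2real (INF \<pi>\<in>couplings \<mu> \<nu>. \<integral>\<^sup>+ z. ennreal (dist (fst z) (snd z)) \<partial>\<pi>) \<le> enn2real (ennreal e)"
    by (intro enn2real_mono) auto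
  then show ?thesis using assms(3) by (simp add: W1_def)
qed

lemma W1_nonneg: "0 \<le> W1 \<mu> \<nu>"
  by (simp add: W1_def)

lemma approx_in_C:
  fixes K :: "('n::finite) mat set"
  assumes C: "Pmono_on K \<subseteq> C" "mix_convex C" and K: "K \<subseteq> psd" "compact K"
    and \<mu>: "\<mu> \<in> Pm K" and e: "0 < e"
  shows "\<exists>\<nu>\<in>C. W1 \<nu> \<mu> \<le> e"
proof -
  have Kb: "K \<in> sets borel" using K by (simp add: borel_compact)
  have \<mu>1: "prob_space \<mu>" "sets \<mu> = sets borel" "emeasure \<mu> K = 1" using \<mu> by (auto simp: Pm_def)
  interpret prob_space \<mu> by fact
  have sp: "space \<mu> = UNIV" using \<mu>1(2) sets_eq_imp_space_eq by fastforce
  have "K \<noteq> {}" using \<mu>1(3) by auto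
  then obtain d where d: "d \<in> K" by auto
  obtain S where S: "S \<subseteq> K" "finite S" "K \<subseteq> (\<Union>x\<in>S. ball x e)"
  proof (rule compactE_image[OF K(2), of K "\<lambda>x. ball x e"])
    show "K \<subseteq> (\<Union>x\<in>K. ball x e)" using e by force
  qed auto
  obtain ss where ss: "set ss = S" using finite_list[OF S(2)] by blast
  define g where "g = pick e d ss"
  have g: "g \<in> borel_measurable borel" unfolding g_def by (rule pick_measurable)
  have gd: "dist (g x) x \<le> e" if "x \<in> K" for x
  proof -
    from S(3) that obtain s where "s \<in> S" "x \<in> ball s e" by blast
    then have "\<exists>s\<in>set ss. dist x s < e" using ss by (auto simp: dist_commute)
    then show ?thesis unfolding g_def using pick_dist[of ss x e d] by (simp add: dist_commute)
  qed
  have g': "g \<in> borel_measurable \<mu>" using g measurable_cong_sets[of \<mu> borel borel borel] \<mu>1(2) by simp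
  define \<nu> where "\<nu> = distr \<mu> borel g"
  have "\<nu> \<in> C"
  proof -
    have fin: "finite (insert d S)" "insert d S \<subseteq> K" using S d by auto
    have "insert d S \<in> sets borel" using fin by (simp add: borel_closed finite_imp_closed)
    then have "emeasure \<nu> (insert d S) = emeasure \<mu> (g -` insert d S \<inter> space \<mu>)"
      unfolding \<nu>_def using g' by (simp add: emeasure_distr)
    also have "g -` insert d S \<inter> space \<mu> = space \<mu>"
      using pick_range[of e d ss] ss unfolding g_def by auto
    finally have "emeasure \<nu> (insert d S) = 1" by (simp add: emeasure_space_1)
    moreover have "prob_space \<nu>" unfolding \<nu>_def by (rule prob_space_distr[OF g'])
    moreover have "sets \<nu> = sets borel" unfolding \<nu>_def by simp
    ultimately show ?thesis using finite_support_in_C[OF C K(1) Kb fin] by blast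
  qed
  moreover have "W1 \<nu> \<mu> \<le> e"
  proof -
    have AE: "AE x in \<mu>. x \<in> K" using \<mu>1 Kb AE_in_set_eq_1 by (simp add: emeasure_eq_measure)
    have "(\<integral>\<^sup>+ x. ennreal (dist (g x) x) \<partial>\<mu>) \<le> (\<integral>\<^sup>+ x. ennreal e \<partial>\<mu>)"
      by (rule nn_integral_mono_AE, rule AE_mp[OF AE], rule AE_I2) (use gd in \<open>auto intro!: ennreal_leI\<close>)
    also have "\<dots> = ennreal e" by (simp add: emeasure_space_1)
    finally show ?thesis
      using coupling_map[OF \<mu>1(1,2) g] e unfolding \<nu>_def by (intro W1_le) auto
  qed
  ultimately show ?thesis by blast
qed

lemma part1:
  fixes K :: "('n::finite) mat set"
  assumes "compact K" and "K \<subseteq> psd"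
  shows "closed_convex_hull_W1 K (Pmono_on K) = Pm K"
proof
  show "closed_convex_hull_W1 K (Pmono_on K) \<subseteq> Pm K"
    unfolding closed_convex_hull_W1_def
    by (rule Inter_lower) (auto simp: W1_closed_def mix_convex_Pm Pmono_on_def)
  show "Pm K \<subseteq> closed_convex_hull_W1 K (Pmono_on K)"
    unfolding closed_convex_hull_W1_def
  proof (intro Inter_greatest subsetI)
    fix C \<mu> assume C: "C \<in> {C. Pmono_on K \<subseteq> C \<and> W1_closed K C \<and> mix_convex C}" and \<mu>: "\<mu> \<in> Pm K"
    have "\<forall>n. \<exists>\<nu>\<in>C. W1 \<nu> \<mu> \<le> 1 / real (Suc n)"
      using approx_in_C[of K C \<mu>] C assms \<mu> by auto
    then obtain f where f: "\<And>n. f n \<in> C" "\<And>n. W1 (f n) \<mu> \<le> 1 / real (Suc n)"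
      by metis
    have "(\<lambda>n. W1 (f n) \<mu>) \<longlonglongrightarrow> 0"
    proof (rule tendsto_sandwich[of "\<lambda>_. 0" _ _ "\<lambda>n. 1 / real (Suc n)"])
      show "\<forall>\<^sub>F n in sequentially. 0 \<le> W1 (f n) \<mu>" by (simp add: W1_nonneg)
      show "\<forall>\<^sub>F n in sequentially. W1 (f n) \<mu> \<le> 1 / real (Suc n)" using f by simp
      show "(\<lambda>n. 1 / real (Suc n)) \<longlonglongrightarrow> 0" using LIMSEQ_inverse_real_of_nat by (simp add: inverse_eq_divide)
    qed simp
    then show "\<mu> \<in> C" using C f \<mu> unfolding W1_closed_def by blast
  qed
qed


lemma quad_expand: "x \<bullet> ((A::('n::finite) mat) *v x) = (\<Sum>i\<in>UNIV. \<Sum>j\<in>UNIV. x$i * (A$i$j * x$j))"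
  by (simp add: matrix_vector_mult_def inner_vec_def sum_distrib_left)

lemma axis_quad: "axis k 1 \<bullet> ((P::('n::finite) mat) *v axis l 1) = P$k$l"
  by (simp add: matrix_vector_mult_basis inner_axis' column_def)

lemma psd_diag: assumes "P \<in> psd" shows "0 \<le> (P::('n::finite) mat)$i$i"
proof -
  have "0 \<le> axis i 1 \<bullet> (P *v axis i 1)" using assms by (simp add: psd_def)
  then show ?thesis by (simp add: axis_quad)
qed

lemma psd_offdiag_zero:
  assumes "P \<in> psd" "\<And>k. (P::('n::finite) mat)$k$k = 0"
  shows "P$i$j = 0"
proof -
  have "transpose P = P" using assms(1) by (simp add: psd_def)
  then have "(transpose P)$j$i = P$j$i" by simp
  then have sym: "P$j$i = P$i$j" by (simp add: transpose_def)
  have pos: "\<forall>x. 0 \<le> x \<bullet> (P *v x)" using assms(1) by (simp add: psd_def)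
  have q: "(axis i 1 + c *\<^sub>R axis j 1) \<bullet> (P *v (axis i 1 + c *\<^sub>R axis j 1)) = 2 * c * P$i$j" for c
  proof -
    have "(axis i 1 + c *\<^sub>R axis j 1) \<bullet> (P *v (axis i 1 + c *\<^sub>R axis j 1))
      = axis i 1 \<bullet> (P *v axis i 1) + c * (axis i 1 \<bullet> (P *v axis j 1)) + c * (axis j 1 \<bullet> (P *v axis i 1))
        + c * c * (axis j 1 \<bullet> (P *v axis j 1))"
      by (simp add: matrix_vector_right_distrib matrix_vector_mult_scaleR inner_add_left inner_add_right algebra_simps)
    also have "\<dots> = 2 * c * P$i$j" using sym assms(2) by (simp add: axis_quad)
    finally show ?thesis .
  qed
  have "0 \<le> 2 * 1 * P$i$j" using pos[rule_format, of "axis i 1 + 1 *\<^sub>R axis j 1"] q[of 1] by simp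
  moreover have "0 \<le> 2 * (-1) * P$i$j" using pos[rule_format, of "axis i 1 + (-1) *\<^sub>R axis j 1"] q[of "-1"] by simp
  ultimately show ?thesis by simp
qed

lemma psd_trace_zero:
  assumes "P \<in> psd" "trace (P::('n::finite) mat) = 0"
  shows "P = 0"
proof -
  have "(\<Sum>k\<in>UNIV. P$k$k) = 0" using assms(2) by (simp add: trace_def)
  then have z: "\<forall>k\<in>UNIV. P$k$k = 0"
    using sum_nonneg_eq_0_iff[of UNIV "\<lambda>k. P$k$k"] psd_diag[OF assms(1)] by simp
  show ?thesis
    unfolding vec_eq_iff
  proof (intro allI)
    fix i j
    have "P$i$j = 0" by (rule psd_offdiag_zero[OF assms(1)]) (use z in simp)
    then show "P$i$j = 0$i$j" by simp
  qed
qed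

lemma loewner_trace:
  assumes "loewner_le A B" shows "trace (A::('n::finite) mat) \<le> trace B"
proof -
  have "0 \<le> trace (B - A)" unfolding trace_def
    by (intro sum_nonneg psd_diag) (use assms in \<open>simp add: loewner_le_def\<close>)
  then show ?thesis by (simp add: trace_sub)
qed

lemma loewner_trace_eq: "loewner_le A B \<Longrightarrow> trace (A::('n::finite) mat) = trace B \<Longrightarrow> A = B"
  unfolding loewner_le_def using psd_trace_zero[of "B - A"] by (simp add: trace_sub)

lemma continuous_trace: "continuous_on S (trace :: ('n::finite) mat \<Rightarrow> real)"
  unfolding trace_def by (intro continuous_on_sum continuous_on_component continuous_on_id)


lemma chain_Pmono:
  fixes C :: "('n::finite) mat set" and \<nu> :: "'n mat measure"
  assumes C: "compact C" "C \<noteq> {}" "C \<subseteq> psd"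
    and chain: "\<And>A B. A \<in> C \<Longrightarrow> B \<in> C \<Longrightarrow> loewner_le A B \<or> loewner_le B A"
    and \<nu>: "prob_space \<nu>" "sets \<nu> = sets borel" "emeasure \<nu> C = 1"
  shows "\<nu> \<in> Pmono"
proof -
  interpret \<nu>: prob_space \<nu> by fact
  have sp\<nu>: "space \<nu> = UNIV" using \<nu>(2) sets_eq_imp_space_eq by fastforce
  have Cb: "C \<in> sets borel" using C(1) by (simp add: borel_compact)
  have inj: "inj_on trace C"
  proof (rule inj_onI)
    fix A B assume AB: "A \<in> C" "B \<in> C" "trace A = trace B"
    show "A = B"
    proof (cases "loewner_le A B")
      case True then show ?thesis using AB loewner_trace_eq[of A B] by simp
    next
      case False
      then have "loewner_le B A" using chain[OF AB(1,2)] by simp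
      then show ?thesis using AB loewner_trace_eq[of B A] by simp
    qed
  qed
  define T where "T = trace ` C"
  have T: "compact T" "T \<noteq> {}" unfolding T_def using C continuous_trace
    by (auto intro: compact_continuous_image)
  have Tc: "closed T" using T by (simp add: compact_imp_closed)
  have Tb: "T \<in> sets borel" using Tc by (simp add: borel_closed)
  define h where "h = the_inv_into C trace"
  have h_cont: "continuous_on T h" unfolding h_def T_def
    using continuous_on_inv_into[OF continuous_trace C(1) inj] .
  have h_tr: "h (trace A) = A" if "A \<in> C" for A
    unfolding h_def using the_inv_into_f_f[OF inj that] .
  have hC: "h t \<in> C" if "t \<in> T" for t
    using that unfolding h_def T_def using the_inv_into_into[OF inj] by auto
  have trh: "trace (h t) = t" if "t \<in> T" for t
    using that unfolding T_def by (auto simp: h_tr)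
  have h_mono: "loewner_le (h s) (h t)" if st: "s \<in> T" "t \<in> T" "s \<le> t" for s t
  proof (cases "loewner_le (h s) (h t)")
    case False
    then have "loewner_le (h t) (h s)" using chain[OF hC[OF st(1)] hC[OF st(2)]] by simp
    then have "trace (h t) \<le> trace (h s)" by (rule loewner_trace)
    then have "t \<le> s" using trh st by simp
    then have "s = t" using st by simp
    then show ?thesis by (simp add: loewner_refl)
  qed simp
  define t0 where "t0 = Inf T"
  have bddT: "bdd_below T" using T(1) by (simp add: compact_imp_bounded bounded_imp_bdd_below)
  have t0T: "t0 \<in> T" unfolding t0_def using T(2) bddT Tc by (rule closed_contains_Inf)
  have t0le: "t0 \<le> t" if "t \<in> T" for t unfolding t0_def using that bddT by (rule cInf_lower)
  define hh where "hh = (\<lambda>x. if x \<in> T then h x else h t0)"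
  have hh_meas: "hh \<in> borel_measurable borel"
    unfolding hh_def by (intro borel_measurable_continuous_on_if h_cont continuous_on_const Tb)
  have hhC: "hh x \<in> C" for x unfolding hh_def using hC t0T by auto
  have tr_meas: "trace \<in> borel_measurable (borel :: 'n mat measure)"
    using continuous_trace by (intro borel_measurable_continuous_onI)
  have tr_meas\<nu>: "trace \<in> borel_measurable \<nu>"
    using tr_meas measurable_cong_sets[of \<nu> borel borel borel] \<nu>(2) by simp
  define M where "M = distr \<nu> borel trace"
  have rd: "real_distribution M"
    unfolding real_distribution_def real_distribution_axioms_def M_def
    using \<nu>.prob_space_distr[OF tr_meas\<nu>] by simp
  interpret M: cdf_distribution M
    using rd by (simp add: cdf_distribution_def)
  have MT: "measure M T = 1"
  proof -
    have "emeasure M T = emeasure \<nu> (trace -` T \<inter> space \<nu>)" unfolding M_def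
      using Tb tr_meas\<nu> by (intro emeasure_distr) auto
    moreover have "emeasure \<nu> C \<le> emeasure \<nu> (trace -` T \<inter> space \<nu>)"
      using measurable_sets[OF tr_meas\<nu> Tb] by (intro emeasure_mono) (auto simp: T_def sp\<nu>)
    ultimately have "1 \<le> emeasure M T" using \<nu>(3) by simp
    then have "1 \<le> measure M T" by (simp add: M.emeasure_eq_measure)
    then show ?thesis using M.prob_le_1[of T] by simp
  qed
  define I where "I = (\<lambda>\<omega>. Inf {x. \<omega> \<le> cdf M x})"
  have IT: "I \<omega> \<in> T" if \<omega>: "0 < \<omega>" "\<omega> < 1" for \<omega>
  proof (rule ccontr)
    assume nT: "I \<omega> \<notin> T"
    obtain d where d: "d > 0" "ball (I \<omega>) d \<subseteq> -T"
      using open_contains_ball_eq[of "-T" "I \<omega>"] Tc nT by auto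
    have p1: "\<omega> \<le> cdf M (I \<omega>)" using M.pseudoinverse[OF \<omega>, of "I \<omega>"] unfolding I_def by simp
    have p2: "cdf M (I \<omega> - d/2) < \<omega>" using M.pseudoinverse[OF \<omega>, of "I \<omega> - d/2"] d unfolding I_def by simp
    have un: "{..I \<omega>} = {..I \<omega> - d/2} \<union> {I \<omega> - d/2<..I \<omega>}" using d by auto
    have "cdf M (I \<omega>) = measure M {..I \<omega> - d/2} + measure M {I \<omega> - d/2<..I \<omega>}"
      unfolding cdf_def2 un by (intro M.finite_measure_Union) auto
    moreover have "measure M {I \<omega> - d/2<..I \<omega>} \<le> measure M (UNIV - T)"
    proof (intro M.finite_measure_mono)
      show "{I \<omega> - d/2<..I \<omega>} \<subseteq> UNIV - T"
      proof
        fix y assume y: "y \<in> {I \<omega> - d/2<..I \<omega>}"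
        then have "y \<in> ball (I \<omega>) d" using d by (auto simp: dist_real_def)
        then show "y \<in> UNIV - T" using d by auto
      qed
    qed (use Tb in auto)
    moreover have "measure M (UNIV - T) = 0" using M.prob_compl[of T] Tb MT by simp
    ultimately have "cdf M (I \<omega>) \<le> cdf M (I \<omega> - d/2)" 
      using measure_nonneg[of M "{I \<omega> - d/2<..I \<omega>}"] by (simp add: cdf_def2)
    then show False using p1 p2 by simp
  qed
  define q where "q = (\<lambda>u::real. if u \<in> {0<..<1} then hh (I u) else hh t0)"
  have qC: "q u \<in> C" for u unfolding q_def using hhC by simp
  have q_in: "q u = h (I u)" if "u \<in> {0<..<1}" for u
    using that IT unfolding q_def hh_def by auto
  have q_out: "q u = h t0" if "u \<notin> {0<..<1}" for u
    using that t0T unfolding q_def hh_def by auto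
  have q_mono: "loewner_le (q u) (q v)" if uv: "u \<in> {0..<1}" "v \<in> {0..<1}" "u \<le> v" for u v
  proof (cases "u \<in> {0<..<1}")
    case True
    then have v: "v \<in> {0<..<1}" using uv by auto
    have "I u \<le> I v" using M.mono_I True v uv(3) unfolding I_def mono_on_def by blast
    then show ?thesis using q_in[OF True] q_in[OF v] IT True v by (auto intro!: h_mono)
  next
    case False
    show ?thesis
    proof (cases "v \<in> {0<..<1}")
      case True
      then show ?thesis using q_out[OF False] q_in[OF True] IT True t0T t0le
        by (auto intro!: h_mono)
    next
      case False': False
      then show ?thesis using q_out[OF False] q_out[OF False'] by (simp add: loewner_refl)
    qed
  qed
  have I_meas: "I \<in> borel_measurable (restrict_space borel {0<..<1})"
    unfolding I_def by (rule M.measurable_CI)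
  have I_meas': "I \<in> borel_measurable (restrict_space lborel {0<..<1})"
    using I_meas measurable_cong_sets[of "restrict_space lborel {0<..<1::real}" "restrict_space borel {0<..<1}" borel borel]
    by (simp add: sets_restrict_space)
  have q_meas: "q \<in> borel_measurable borel"
    unfolding q_def
  proof (subst measurable_If_restrict_space_iff)
    show "{x \<in> space borel. x \<in> {0<..<1::real}} \<in> sets borel" by simp
    show "(\<lambda>x. hh (I x)) \<in> borel_measurable (restrict_space borel {x. x \<in> {0<..<1::real}}) \<and>
          (\<lambda>x. hh t0) \<in> borel_measurable (restrict_space borel {x. x \<notin> {0<..<1::real}})"
      unfolding Collect_mem_eq by (intro conjI measurable_compose[OF I_meas hh_meas] measurable_const) auto
  qed
  have q_meas': "q \<in> borel_measurable (restrict_space lborel {0<..<1})"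
    using q_meas by (intro measurable_restrict_space1) simp
  define U01 where "U01 = uniform_measure lborel {0..<1::real}"
  have eqA: "distr U01 borel q = distr (restrict_space lborel {0<..<1}) borel q"
  proof (rule measure_eqI)
    show "sets (distr U01 borel q) = sets (distr (restrict_space lborel {0<..<1}) borel q)" by simp
    fix A :: "'n mat set" assume "A \<in> sets (distr U01 borel q)"
    then have A: "A \<in> sets borel" by simp
    have qA: "q -` A \<in> sets lborel" using measurable_sets[OF q_meas A] by simp
    have "emeasure (distr U01 borel q) A = emeasure U01 (q -` A \<inter> space U01)"
      using A q_meas by (intro emeasure_distr) (auto simp: U01_def)
    also have "\<dots> = emeasure lborel ({0..<1} \<inter> q -` A)"
      unfolding U01_def using qA by (simp add: emeasure_uniform_measure divide_ennreal_def)
    also have "\<dots> = emeasure lborel (q -` A \<inter> {0<..<1})"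
      by (rule emeasure_eq_AE) (use qA AE_lborel_singleton[of 0] in \<open>auto elim!: eventually_mono\<close>)
    also have "\<dots> = emeasure (restrict_space lborel {0<..<1}) (q -` A \<inter> space (restrict_space lborel {0<..<1}))"
      by (subst emeasure_restrict_space) (auto simp: space_restrict_space)
    also have "\<dots> = emeasure (distr (restrict_space lborel {0<..<1}) borel q) A"
      using A q_meas' by (intro emeasure_distr[symmetric]) auto
    finally show "emeasure (distr U01 borel q) A = emeasure (distr (restrict_space lborel {0<..<1}) borel q) A" .
  qed
  have "distr (restrict_space lborel {0<..<1}) borel q = distr (restrict_space lborel {0<..<1}) borel (\<lambda>u. hh (I u))"
    by (rule distr_cong) (auto simp: space_restrict_space q_def)
  also have "\<dots> = distr (distr (restrict_space lborel {0<..<1}) borel I) borel hh"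
    using distr_distr[OF hh_meas I_meas'] by (simp add: comp_def)
  also have "distr (restrict_space lborel {0<..<1}) borel I = M"
    unfolding I_def by (rule M.distr_I_eq_M)
  also have "distr M borel hh = distr \<nu> borel (\<lambda>x. hh (trace x))"
    unfolding M_def using distr_distr[OF hh_meas tr_meas\<nu>] by (simp add: comp_def)
  also have "\<dots> = \<nu>"
  proof (rule measure_eqI)
    show "sets (distr \<nu> borel (\<lambda>x. hh (trace x))) = sets \<nu>" using \<nu>(2) by simp
    fix A assume "A \<in> sets (distr \<nu> borel (\<lambda>x. hh (trace x)))"
    then have A: "A \<in> sets borel" by simp
    have m: "(\<lambda>x. hh (trace x)) \<in> borel_measurable \<nu>"
      using measurable_compose[OF tr_meas\<nu> hh_meas] .
    have AEC: "AE x in \<nu>. x \<in> C" using \<nu>.AE_in_set_eq_1[of C] \<nu> Cb by (simp add: \<nu>.emeasure_eq_measure)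
    have "emeasure (distr \<nu> borel (\<lambda>x. hh (trace x))) A = emeasure \<nu> ((\<lambda>x. hh (trace x)) -` A \<inter> space \<nu>)"
      using A m by (intro emeasure_distr) auto
    also have "\<dots> = emeasure \<nu> A"
    proof (rule emeasure_eq_AE)
      show "AE x in \<nu>. (x \<in> (\<lambda>x. hh (trace x)) -` A \<inter> space \<nu>) = (x \<in> A)"
        using AEC
      proof (rule eventually_mono)
        fix x assume "x \<in> C"
        then have "hh (trace x) = x" unfolding hh_def T_def by (auto simp: h_tr)
        then show "(x \<in> (\<lambda>x. hh (trace x)) -` A \<inter> space \<nu>) = (x \<in> A)" by (simp add: sp\<nu>)
      qed
      show "(\<lambda>x. hh (trace x)) -` A \<inter> space \<nu> \<in> sets \<nu>" using measurable_sets[OF m A] .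
      show "A \<in> sets \<nu>" using A \<nu>(2) by simp
    qed
    finally show "emeasure (distr \<nu> borel (\<lambda>x. hh (trace x))) A = emeasure \<nu> A" .
  qed
  finally have "distr U01 borel q = \<nu>" using eqA by simp
  then show ?thesis
    unfolding Pmono_def U01_def using q_meas qC C(3) q_mono
    by (intro CollectI exI[of _ q]) auto
qed


lemma exists_small_coupling:
  fixes K :: "('n::finite) mat set"
  assumes K: "compact K" and \<mu>: "\<mu> \<in> Pm K" and \<nu>: "\<nu> \<in> Pm K" and W: "W1 \<mu> \<nu> < e"
  shows "\<exists>\<pi>\<in>couplings \<mu> \<nu>. (\<integral>\<^sup>+ z. ennreal (dist (fst z) (snd z)) \<partial>\<pi>) < ennreal e"
proof -
  have \<mu>1: "prob_space \<mu>" "sets \<mu> = sets borel" "emeasure \<mu> K = 1" using \<mu> by (auto simp: Pm_def)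
  have \<nu>1: "prob_space \<nu>" "sets \<nu> = sets borel" "emeasure \<nu> K = 1" using \<nu> by (auto simp: Pm_def)
  have sp\<mu>: "space \<mu> = UNIV" using \<mu>1(2) sets_eq_imp_space_eq by fastforce
  have sp\<nu>: "space \<nu> = UNIV" using \<nu>1(2) sets_eq_imp_space_eq by fastforce
  have Kb: "K \<in> sets borel" using K by (simp add: borel_compact)
  interpret P: pair_prob_space \<mu> \<nu>
    by (simp add: pair_prob_space_def pair_sigma_finite_def prob_space_imp_sigma_finite \<mu>1(1) \<nu>1(1))
  define \<pi>0 where "\<pi>0 = \<mu> \<Otimes>\<^sub>M \<nu>"
  have sf\<mu>: "sigma_finite_measure \<mu>" "sigma_finite_measure \<nu>"
    using \<mu>1(1) \<nu>1(1) by (auto intro: prob_space_imp_sigma_finite)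
  have Times: "emeasure (\<mu> \<Otimes>\<^sub>M \<nu>) (A \<times> B) = emeasure \<mu> A * emeasure \<nu> B"
    if "A \<in> sets borel" "B \<in> sets borel" for A B
    using that \<mu>1(2) \<nu>1(2) by (intro sigma_finite_measure.emeasure_pair_measure_Times[OF sf\<mu>(2)]) auto
  have one: "emeasure \<mu> UNIV = 1" "emeasure \<nu> UNIV = 1"
    using P.M1.emeasure_space_1 P.M2.emeasure_space_1 sp\<mu> sp\<nu> by auto
  have sets\<pi>0: "sets \<pi>0 = sets (borel \<Otimes>\<^sub>M borel)"
    unfolding \<pi>0_def by (rule sets_pair_measure_cong[OF \<mu>1(2) \<nu>1(2)])
  have c0: "\<pi>0 \<in> couplings \<mu> \<nu>"
    unfolding couplings_def
  proof (intro CollectI conjI ballI)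
    show "sets \<pi>0 = sets (borel \<Otimes>\<^sub>M borel)" by (rule sets\<pi>0)
    show "prob_space \<pi>0" unfolding \<pi>0_def by (rule P.prob_space_axioms)
    fix A :: "'n mat set" assume A: "A \<in> sets borel"
    show "emeasure \<pi>0 (A \<times> UNIV) = emeasure \<mu> A"
      unfolding \<pi>0_def using Times[OF A, of UNIV] one by simp
    show "emeasure \<pi>0 (UNIV \<times> A) = emeasure \<nu> A"
      unfolding \<pi>0_def using Times[OF _ A, of UNIV] one by simp
  qed
  have KK: "K \<times> K \<in> sets \<pi>0" using Kb sets\<pi>0 by (simp add: pair_measureI)
  have "emeasure \<pi>0 (K \<times> K) = 1"
    unfolding \<pi>0_def using Times[OF Kb Kb] \<mu>1 \<nu>1 by simp
  then have AEK: "AE z in \<pi>0. z \<in> K \<times> K"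
    using P.AE_in_set_eq_1[OF KK[unfolded \<pi>0_def]] unfolding \<pi>0_def by (simp add: P.emeasure_eq_measure)
  have "(\<integral>\<^sup>+ z. ennreal (dist (fst z) (snd z)) \<partial>\<pi>0) \<le> (\<integral>\<^sup>+ z. ennreal (diameter K) \<partial>\<pi>0)"
    using AEK
    by (intro nn_integral_mono_AE) (auto elim!: eventually_mono intro!: ennreal_leI diameter_bounded_bound compact_imp_bounded K)
  also have "\<dots> = ennreal (diameter K)" unfolding \<pi>0_def by (simp add: P.emeasure_space_1)
  finally have fin: "(INF \<pi>\<in>couplings \<mu> \<nu>. \<integral>\<^sup>+ z. ennreal (dist (fst z) (snd z)) \<partial>\<pi>) < top"
    using c0 by (meson INF_lower ennreal_less_top order.strict_trans1 order_trans)
  have "ennreal (W1 \<mu> \<nu>) = (INF \<pi>\<in>couplings \<mu> \<nu>. \<integral>\<^sup>+ z. ennreal (dist (fst z) (snd z)) \<partial>\<pi>)"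
    unfolding W1_def using fin by simp
  moreover have "ennreal (W1 \<mu> \<nu>) < ennreal e"
    using W by (simp add: ennreal_less_iff W1_def)
  ultimately show ?thesis by (simp add: INF_less_iff)
qed

lemma W1_open_sublevel:
  fixes K :: "('n::finite) mat set"
  assumes K: "compact K" and F: "closed F" "F \<noteq> {}"
  shows "W1_open K {\<nu> \<in> Pm K. a < measure \<nu> (- F)}"
  unfolding W1_open_def
proof (intro conjI ballI)
  show "{\<nu> \<in> Pm K. a < measure \<nu> (- F)} \<subseteq> Pm K" by auto
  fix \<mu> assume "\<mu> \<in> {\<nu> \<in> Pm K. a < measure \<nu> (- F)}"
  then have \<mu>: "\<mu> \<in> Pm K" "a < measure \<mu> (- F)" by auto
  have \<mu>1: "prob_space \<mu>" "sets \<mu> = sets borel" using \<mu> by (auto simp: Pm_def)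
  interpret \<mu>: prob_space \<mu> by fact
  define Ud where "Ud = (\<lambda>n::nat. {x. 1 / real (Suc n) < infdist x F})"
  have Ud_open: "open (Ud n)" for n
    unfolding Ud_def by (intro open_Collect_less continuous_intros)
  have Ud_sets: "Ud n \<in> sets \<mu>" for n using Ud_open \<mu>1(2) by simp
  have inc: "incseq Ud"
  proof (rule incseq_SucI)
    fix n
    have "1 / real (Suc (Suc n)) \<le> 1 / real (Suc n)" by (simp add: frac_le)
    then show "Ud n \<subseteq> Ud (Suc n)" unfolding Ud_def by auto
  qed
  have UN: "(\<Union>n. Ud n) = - F"
  proof (intro set_eqI iffI)
    fix x assume "x \<in> (\<Union>n. Ud n)"
    then obtain n where "1 / real (Suc n) < infdist x F" unfolding Ud_def by auto
    moreover have "0 < 1 / real (Suc n)" by simp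
    ultimately have "infdist x F \<noteq> 0" by linarith
    then show "x \<in> - F" using in_closed_iff_infdist_zero[OF F] by auto
  next
    fix x assume "x \<in> - F"
    then have "0 < infdist x F" using in_closed_iff_infdist_zero[OF F] infdist_nonneg[of x F] by auto
    then obtain n where "inverse (real (Suc n)) < infdist x F" using reals_Archimedean by blast
    then show "x \<in> (\<Union>n. Ud n)" unfolding Ud_def by (auto simp: inverse_eq_divide)
  qed
  have "(\<lambda>n. measure \<mu> (Ud n)) \<longlonglongrightarrow> measure \<mu> (\<Union>n. Ud n)"
    using Ud_sets inc by (intro \<mu>.finite_Lim_measure_incseq) auto
  then have "(\<lambda>n. measure \<mu> (Ud n)) \<longlonglongrightarrow> measure \<mu> (- F)" unfolding UN .
  then have "\<forall>\<^sub>F n in sequentially. a < measure \<mu> (Ud n)" using \<mu>(2) by (rule order_tendstoD(1))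
  then obtain n where n: "a < measure \<mu> (Ud n)" by (metis eventually_sequentially order_refl)
  define \<delta> where "\<delta> = 1 / real (Suc n)"
  define b where "b = measure \<mu> (Ud n)"
  have \<delta>: "0 < \<delta>" unfolding \<delta>_def by simp
  show "\<exists>e>0. \<forall>\<nu>\<in>Pm K. W1 \<mu> \<nu> < e \<longrightarrow> \<nu> \<in> {\<nu> \<in> Pm K. a < measure \<nu> (- F)}"
  proof (intro exI[of _ "(b - a) * \<delta>"] conjI ballI impI)
    show "0 < (b - a) * \<delta>" using n \<delta> unfolding b_def by simp
    fix \<nu> assume \<nu>: "\<nu> \<in> Pm K" and W: "W1 \<mu> \<nu> < (b - a) * \<delta>"
    obtain \<pi> where \<pi>: "\<pi> \<in> couplings \<mu> \<nu>"
      and int: "(\<integral>\<^sup>+ z. ennreal (dist (fst z) (snd z)) \<partial>\<pi>) < ennreal ((b - a) * \<delta>)"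
      using exists_small_coupling[OF K \<mu>(1) \<nu> W] by blast
    have \<pi>1: "sets \<pi> = sets (borel \<Otimes>\<^sub>M borel)" "prob_space \<pi>"
      and marg: "\<And>A. A \<in> sets borel \<Longrightarrow> emeasure \<pi> (A \<times> UNIV) = emeasure \<mu> A \<and> emeasure \<pi> (UNIV \<times> A) = emeasure \<nu> A"
      using \<pi> unfolding couplings_def by auto
    interpret \<pi>: prob_space \<pi> by fact
    have Fb: "- F \<in> sets borel" using F by simp
    have m1: "measure \<pi> (Ud n \<times> UNIV) = b"
      unfolding b_def measure_def using marg[of "Ud n"] Ud_open by simp
    have m2: "measure \<pi> (UNIV \<times> - F) = measure \<nu> (- F)"
      unfolding measure_def using marg[OF Fb] by simp
    define D where "D = (\<lambda>z. dist (fst z) (snd z)) -` {\<delta>..} \<inter> space (borel \<Otimes>\<^sub>M (borel :: 'n mat measure))"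
    have dmeas: "(\<lambda>z. dist (fst z) (snd z)) \<in> borel_measurable (borel \<Otimes>\<^sub>M (borel :: 'n mat measure))"
      by (intro borel_measurable_dist measurable_fst'' measurable_snd'' measurable_ident_sets refl)
    have D: "D \<in> sets \<pi>" unfolding D_def \<pi>1(1) by (rule measurable_sets[OF dmeas]) simp
    have sets1: "Ud n \<times> UNIV \<in> sets \<pi>" "UNIV \<times> - F \<in> sets \<pi>"
      unfolding \<pi>1(1) using Ud_open Fb by (auto intro!: pair_measureI)
    have sub: "Ud n \<times> UNIV \<subseteq> (UNIV \<times> - F) \<union> D"
    proof
      fix z assume z: "z \<in> Ud n \<times> (UNIV :: 'n mat set)"
      show "z \<in> (UNIV \<times> - F) \<union> D"
      proof (cases "snd z \<in> F")
        case True
        have "infdist (fst z) F \<le> dist (fst z) (snd z)" using True by (rule infdist_le)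
        moreover have "\<delta> < infdist (fst z) F" using z unfolding Ud_def \<delta>_def by auto
        ultimately show ?thesis unfolding D_def by (auto simp: space_pair_measure)
      qed (auto simp: mem_Times_iff)
    qed
    have "b \<le> measure \<pi> ((UNIV \<times> - F) \<union> D)"
      unfolding m1[symmetric] using sub sets1 D by (intro \<pi>.finite_measure_mono) auto
    also have "\<dots> \<le> measure \<pi> (UNIV \<times> - F) + measure \<pi> D"
      using sets1 D by (intro measure_subadditive) (auto simp: \<pi>.emeasure_eq_measure)
    finally have ineq: "b \<le> measure \<nu> (- F) + measure \<pi> D" using m2 by simp
    have "ennreal \<delta> * emeasure \<pi> D = (\<integral>\<^sup>+ z. ennreal \<delta> * indicator D z \<partial>\<pi>)"
      using D by (simp add: nn_integral_cmult_indicator)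
    also have "\<dots> \<le> (\<integral>\<^sup>+ z. ennreal (dist (fst z) (snd z)) \<partial>\<pi>)"
      by (intro nn_integral_mono) (auto simp: D_def indicator_def intro!: ennreal_leI)
    finally have "ennreal (\<delta> * measure \<pi> D) < ennreal ((b - a) * \<delta>)"
      using int \<delta> by (simp add: \<pi>.emeasure_eq_measure ennreal_mult'')
    then have "\<delta> * measure \<pi> D < (b - a) * \<delta>"
      using \<delta> by (subst (asm) ennreal_less_iff) auto
    then have "measure \<pi> D < b - a" using \<delta> by (simp add: mult.commute)
    then show "\<nu> \<in> {\<nu> \<in> Pm K. a < measure \<nu> (- F)}" using ineq \<nu> by auto
  qed
qed


lemma part2:
  fixes K :: "('n::finite) mat set" and \<eta> :: "'n mat measure measure"
  assumes K: "compact K" "K \<subseteq> psd"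
    and \<eta>: "space \<eta> = Pm K" "sets \<eta> = W1_borel_sets K" "prob_space \<eta>"
    and \<mu>: "\<mu> \<in> Pmono_on K" and bar: "\<forall>A\<in>sets borel. emeasure \<mu> A = (\<integral>\<^sup>+ \<nu>. emeasure \<nu> A \<partial>\<eta>)"
  shows "AE \<nu> in \<eta>. \<nu> \<in> Pmono_on K"
proof -
  obtain q :: "real \<Rightarrow> 'n mat" where q: "q \<in> borel_measurable borel"
     "\<forall>u\<in>{0..<1}. \<forall>v\<in>{0..<1}. u \<le> v \<longrightarrow> loewner_le (q u) (q v)"
     "\<mu> = distr (uniform_measure lborel {0..<1}) borel q"
    using \<mu> unfolding Pmono_on_def Pmono_def by blast
  have \<mu>1: "prob_space \<mu>" "sets \<mu> = sets borel" "emeasure \<mu> K = 1"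
    using \<mu> by (auto simp: Pmono_on_def Pm_def)
  interpret \<mu>: prob_space \<mu> by fact
  have Kb: "K \<in> sets borel" using K(1) by (simp add: borel_compact)
  define Q where "Q = q ` {0..<1}"
  define F where "F = closure Q \<inter> K"
  have Fc: "compact F" unfolding F_def using K(1) by (intro closed_Int_compact) auto
  have Fb: "F \<in> sets borel" using Fc by (simp add: borel_compact)
  have Fpsd: "F \<subseteq> psd" using K(2) F_def by auto
  define R where "R = (\<lambda>z::'n mat \<times> 'n mat. snd z - fst z) -` psd \<union> (\<lambda>z. fst z - snd z) -` psd"
  have Rc: "closed R" unfolding R_def
    by (intro closed_Un continuous_closed_vimage closed_psd continuous_intros)
  have QQ: "Q \<times> Q \<subseteq> R"
  proof
    fix z assume "z \<in> Q \<times> Q"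
    then obtain u v where uv: "u \<in> {0..<1}" "v \<in> {0..<1}" "z = (q u, q v)" unfolding Q_def by auto
    show "z \<in> R"
    proof (cases "u \<le> v")
      case True
      then have "loewner_le (q u) (q v)" using q(2) uv by blast
      then show ?thesis using uv unfolding R_def loewner_le_def by auto
    next
      case False
      then have "loewner_le (q v) (q u)" using q(2) uv by auto
      then show ?thesis using uv unfolding R_def loewner_le_def by auto
    qed
  qed
  have "closure (Q \<times> Q) \<subseteq> R" using QQ Rc by (rule closure_minimal)
  then have cQQ: "closure Q \<times> closure Q \<subseteq> R" by (simp add: closure_Times)
  have Fchain: "loewner_le A B \<or> loewner_le B A" if "A \<in> F" "B \<in> F" for A B
  proof -
    have "(A, B) \<in> R" using cQQ that unfolding F_def by auto
    then show ?thesis unfolding R_def loewner_le_def by auto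
  qed
  have \<mu>Q: "emeasure \<mu> (closure Q) = 1"
  proof -
    define U01 where "U01 = uniform_measure lborel {0..<1::real}"
    have U01p: "prob_space U01" unfolding U01_def by (intro prob_space_uniform_measure) auto
    have sU: "space U01 = UNIV" unfolding U01_def by simp
    have cb: "closure Q \<in> sets borel" by simp
    have qm: "q \<in> borel_measurable U01" using q(1) unfolding U01_def by simp
    have "emeasure \<mu> (closure Q) = emeasure U01 (q -` closure Q \<inter> space U01)"
      unfolding q(3) U01_def[symmetric] using cb qm by (intro emeasure_distr) auto
    moreover have "emeasure U01 {0..<1} \<le> emeasure U01 (q -` closure Q \<inter> space U01)"
      using measurable_sets[OF qm cb] by (intro emeasure_mono) (auto simp: Q_def sU intro: closure_subset[THEN subsetD])
    moreover have "emeasure U01 {0..<1} = 1" unfolding U01_def by (intro emeasure_uniform_measure_1) auto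
    ultimately have "1 \<le> emeasure \<mu> (closure Q)" by simp
    then show ?thesis using \<mu>.emeasure_le_1[of "closure Q"] by simp
  qed
  have AE1: "AE x in \<mu>. x \<in> closure Q" using \<mu>.AE_in_set_eq_1[of "closure Q"] \<mu>Q \<mu>1(2)
    by (simp add: \<mu>.emeasure_eq_measure)
  have AE2: "AE x in \<mu>. x \<in> K" using \<mu>.AE_in_set_eq_1[of K] \<mu>1 Kb
    by (simp add: \<mu>.emeasure_eq_measure)
  have "AE x in \<mu>. x \<in> F" using AE1 AE2 unfolding F_def by eventually_elim auto
  then have mF: "measure \<mu> F = 1" using \<mu>.AE_in_set_eq_1[of F] Fb \<mu>1(2) by simp
  then have Fne: "F \<noteq> {}" by auto
  have Fcl: "closed F" using Fc by (simp add: compact_imp_closed)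
  have "measure \<mu> (- F) = 0"
    using \<mu>.prob_compl[of F] Fb \<mu>1(2) mF sets_eq_imp_space_eq[OF \<mu>1(2)] by (simp add: Compl_eq_Diff_UNIV)
  then have "emeasure \<mu> (- F) = 0" by (simp add: \<mu>.emeasure_eq_measure)
  then have int0: "(\<integral>\<^sup>+ \<nu>. emeasure \<nu> (- F) \<partial>\<eta>) = 0" using bar Fb by auto
  define S where "S = (\<lambda>m::nat. {\<nu> \<in> Pm K. 1 / real (Suc m) < measure \<nu> (- F)})"
  have S_sets: "S m \<in> sets \<eta>" for m
    unfolding \<eta>(2) W1_borel_sets_def S_def
    using W1_open_sublevel[OF K(1) Fcl Fne] by (intro sigma_sets.Basic) auto
  have S_null: "S m \<in> null_sets \<eta>" for m
  proof -
    have "ennreal (1 / real (Suc m)) * emeasure \<eta> (S m) = (\<integral>\<^sup>+ \<nu>. ennreal (1 / real (Suc m)) * indicator (S m) \<nu> \<partial>\<eta>)"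
      using S_sets by (simp add: nn_integral_cmult_indicator)
    also have "\<dots> \<le> (\<integral>\<^sup>+ \<nu>. emeasure \<nu> (- F) \<partial>\<eta>)"
    proof (intro nn_integral_mono)
      fix \<nu> assume "\<nu> \<in> space \<eta>"
      show "ennreal (1 / real (Suc m)) * indicator (S m) \<nu> \<le> emeasure \<nu> (- F)"
      proof (cases "\<nu> \<in> S m")
        case True
        then have p\<nu>: "prob_space \<nu>" and lt: "1 / real (Suc m) < measure \<nu> (- F)" unfolding S_def Pm_def by auto
        interpret p\<nu>: prob_space \<nu> by fact
        show ?thesis using True lt by (simp add: p\<nu>.emeasure_eq_measure)
      qed simp
    qed
    finally have "ennreal (1 / real (Suc m)) * emeasure \<eta> (S m) = 0" using int0 by simp
    then have "emeasure \<eta> (S m) = 0" by simp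
    then show ?thesis using S_sets by auto
  qed
  have N: "(\<Union>m. S m) \<in> null_sets \<eta>" using S_null by (intro null_sets_UN) auto
  show ?thesis
  proof (rule AE_I'[OF N], rule subsetI)
    fix \<nu> assume "\<nu> \<in> {\<nu> \<in> space \<eta>. \<nu> \<notin> Pmono_on K}"
    then have \<nu>: "\<nu> \<in> Pm K" "\<nu> \<notin> Pmono_on K" using \<eta>(1) by auto
    have \<nu>1: "prob_space \<nu>" "sets \<nu> = sets borel" using \<nu> by (auto simp: Pm_def)
    interpret \<nu>: prob_space \<nu> by fact
    show "\<nu> \<in> (\<Union>m. S m)"
    proof (rule ccontr)
      assume "\<nu> \<notin> (\<Union>m. S m)"
      then have "\<nu> \<notin> S m" for m by blast
      then have nl: "\<not> (1 / real (Suc m) < measure \<nu> (- F))" for m using \<nu>(1) unfolding S_def by blast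
      have le: "measure \<nu> (- F) \<le> 1 / real (Suc m)" for m using nl[of m] by (meson not_less)
      have z: "measure \<nu> (- F) = 0"
      proof (rule ccontr)
        assume "measure \<nu> (- F) \<noteq> 0"
        then have "0 < measure \<nu> (- F)" using measure_nonneg[of \<nu> "- F"] by linarith
        then obtain m where "inverse (real (Suc m)) < measure \<nu> (- F)" using reals_Archimedean by blast
        then show False using le[of m] by (simp add: inverse_eq_divide)
      qed
      have "measure \<nu> F = 1"
        using \<nu>.prob_compl[of F] Fb \<nu>1(2) z sets_eq_imp_space_eq[OF \<nu>1(2)] by (simp add: Compl_eq_Diff_UNIV)
      then have "emeasure \<nu> F = 1" by (simp add: \<nu>.emeasure_eq_measure)
      then have "\<nu> \<in> Pmono" using chain_Pmono[OF Fc Fne Fpsd Fchain \<nu>1] by blast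
      then show False using \<nu> by (simp add: Pmono_on_def)
    qed
  qed
qed


theorem proposition5p10:
  fixes K :: "('n::finite) mat set"
  assumes "compact K" and "K \<subseteq> psd"
  shows "closed_convex_hull_W1 K (Pmono_on K) = Pm K
    \<and> (\<forall>\<eta> :: 'n mat measure measure.
         space \<eta> = Pm K \<and> sets \<eta> = W1_borel_sets K \<and> prob_space \<eta> \<and>
         (\<exists>\<mu>\<in>Pmono_on K. \<forall>A\<in>sets borel.
              emeasure \<mu> A = (\<integral>\<^sup>+ \<nu>. emeasure \<nu> A \<partial>\<eta>))
         \<longrightarrow> (AE \<nu> in \<eta>. \<nu> \<in> Pmono_on K))"
proof (intro conjI allI impI)
  show "closed_convex_hull_W1 K (Pmono_on K) = Pm K" using assms by (rule part1)
next
  fix \<eta> :: "'n mat measure measure"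
  assume H: "space \<eta> = Pm K \<and> sets \<eta> = W1_borel_sets K \<and> prob_space \<eta> \<and>
         (\<exists>\<mu>\<in>Pmono_on K. \<forall>A\<in>sets borel.
              emeasure \<mu> A = (\<integral>\<^sup>+ \<nu>. emeasure \<nu> A \<partial>\<eta>))"
  then obtain \<mu> where \<mu>: "\<mu> \<in> Pmono_on K" "\<forall>A\<in>sets borel. emeasure \<mu> A = (\<integral>\<^sup>+ \<nu>. emeasure \<nu> A \<partial>\<eta>)"
    by blast
  show "AE \<nu> in \<eta>. \<nu> \<in> Pmono_on K"
    using part2[OF assms] H \<mu> by blast
qed

end
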